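(* Let $G$ be a simple 2-connected plane graph whose unbounded face $p_\infty$ has $V_\infty$ vertices. Let $(a,b)$ be an admissible state such that (1) $b_v=b_{v'}=1$ for some edge $vv'$ on the boundary of $p_\infty$; (2) $a_p+b_p=0$ for every bounded face $p$; (3) $(b_{v_1}-b_p)(b_{v_2}-b_p)=0$ for every bounded face $p$ and every edge $v_1v_2$ on the boundary of $p$. Then $b_w\ge1$ for every vertex $w$, $a_p=-1$ for every bounded face $p$, and $B(a,b)\ge 2+V_\infty$.
   Context: A simple 2-connected plane graph $G$ is a simple 2-connected planar graph with a fixed embedding in the plane, so every face is bounded by a cycle. For a face $p$, $l(p)$ is the number of edges on its boundary and $v\in p$ means $v$ lies on the boundary of $p$. An admissible state $(a,b)$ assigns an integer $a_p$ to each bounded face $p$ and an integer $b_v$ to each vertex $v$ such that $a_p+b_v\ge 0$ whenever $p$ is bounded and $v\in p$, and $b_v\ge0$ for every vertex $v$ on $p_\infty$. For a bounded face $p$, $b_p=\min_{v\in p}b_v$. $B(a,b)=2\sum_{v}b_v+\sum_p (l(p)-2)a_p$, with $p$ over bounded faces and $v$ over all vertices. *)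

theory Defs
  imports Main
begin

text \<open>
  The faces are indexed by a finite set F; each face f has a boundary cycle bd f, a list
  of vertices in cyclic order (consistently oriented).  pinf is the unbounded face.
\<close>

definition face_edge :: "'v list \<Rightarrow> 'v \<Rightarrow> 'v \<Rightarrow> bool" where
  "face_edge c u v \<longleftrightarrow>
     (\<exists>i < length c. c ! i = u \<and> c ! ((i + 1) mod length c) = v)"

definition face_corner :: "'v list \<Rightarrow> 'v \<Rightarrow> 'v \<Rightarrow> 'v \<Rightarrow> bool" where
  "face_corner c u v w \<longleftrightarrow>
     (\<exists>i < length c. c ! i = u \<and> c ! ((i + 1) mod length c) = v
                    \<and> c ! ((i + 2) mod length c) = w)"

definition pverts :: "'f set \<Rightarrow> ('f \<Rightarrow> 'v list) \<Rightarrow> 'v set" where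
  "pverts F bd = (\<Union>f\<in>F. set (bd f))"

definition darts :: "'f set \<Rightarrow> ('f \<Rightarrow> 'v list) \<Rightarrow> ('v \<times> 'v) set" where
  "darts F bd = {(u, v). \<exists>f\<in>F. face_edge (bd f) u v}"

definition pedges :: "'f set \<Rightarrow> ('f \<Rightarrow> 'v list) \<Rightarrow> 'v set set" where
  "pedges F bd = {{u, v} | u v. (u, v) \<in> darts F bd}"

definition rot_rel :: "'f set \<Rightarrow> ('f \<Rightarrow> 'v list) \<Rightarrow> 'v \<Rightarrow> ('v \<times> 'v) set" where
  "rot_rel F bd v = {(u, w). \<exists>f\<in>F. face_corner (bd f) u v w}"

definition conn_on :: "'f set \<Rightarrow> ('f \<Rightarrow> 'v list) \<Rightarrow> 'v set \<Rightarrow> bool" where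
  "conn_on F bd S \<longleftrightarrow>
     (\<forall>u\<in>S. \<forall>w\<in>S. (u, w) \<in> ({(x, y). (x, y) \<in> darts F bd \<and> x \<in> S \<and> y \<in> S})\<^sup>*)"

definition plane_2conn :: "'f set \<Rightarrow> ('f \<Rightarrow> 'v list) \<Rightarrow> 'f \<Rightarrow> bool" where
  "plane_2conn F bd pinf \<longleftrightarrow>
     finite F \<and> pinf \<in> F
   \<comment> \<open>every face is bounded by a cycle\<close>
   \<and> (\<forall>f\<in>F. distinct (bd f) \<and> length (bd f) \<ge> 3)
   \<comment> \<open>each directed dart lies on exactly one face (this also forces simplicity)\<close>
   \<and> (\<forall>f\<in>F. \<forall>g\<in>F. \<forall>u v. face_edge (bd f) u v \<and> face_edge (bd g) u v \<longrightarrow> f = g)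
   \<comment> \<open>each edge borders two faces, traversed in opposite directions\<close>
   \<and> (\<forall>u v. (u, v) \<in> darts F bd \<longrightarrow> (v, u) \<in> darts F bd)
   \<comment> \<open>the rotation around each vertex is a single cycle (no pinched vertices)\<close>
   \<and> (\<forall>v u u'. (u, v) \<in> darts F bd \<and> (u', v) \<in> darts F bd
                 \<longrightarrow> (u, u') \<in> (rot_rel F bd v)\<^sup>*)
   \<comment> \<open>2-connected\<close>
   \<and> card (pverts F bd) \<ge> 3
   \<and> conn_on F bd (pverts F bd)
   \<and> (\<forall>x\<in>pverts F bd. conn_on F bd (pverts F bd - {x}))
   \<comment> \<open>Euler's formula: the surface is the sphere (plane)\<close>
   \<and> int (card (pverts F bd)) - int (card (pedges F bd)) + int (card F) = 2"

definition admissible ::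
  "'f set \<Rightarrow> ('f \<Rightarrow> 'v list) \<Rightarrow> 'f \<Rightarrow> ('f \<Rightarrow> int) \<Rightarrow> ('v \<Rightarrow> int) \<Rightarrow> bool" where
  "admissible F bd pinf a b \<longleftrightarrow>
     (\<forall>p\<in>F - {pinf}. \<forall>v\<in>set (bd p). a p + b v \<ge> 0)
   \<and> (\<forall>v\<in>set (bd pinf). b v \<ge> 0)"

definition bface :: "('f \<Rightarrow> 'v list) \<Rightarrow> ('v \<Rightarrow> int) \<Rightarrow> 'f \<Rightarrow> int" where
  "bface bd b p = Min (b ` set (bd p))"

definition Bval ::
  "'f set \<Rightarrow> ('f \<Rightarrow> 'v list) \<Rightarrow> 'f \<Rightarrow> ('f \<Rightarrow> int) \<Rightarrow> ('v \<Rightarrow> int) \<Rightarrow> int" where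
  "Bval F bd pinf a b =
     2 * (\<Sum>v\<in>pverts F bd. b v) + (\<Sum>p\<in>F - {pinf}. (int (length (bd p)) - 2) * a p)"

end

theory Submission
  imports Defs
begin

lemma mod_suc_eq: "(i::nat) < n \<Longrightarrow> Suc i mod n = (if Suc i = n then 0 else Suc i)"
proof (cases "i + 1 = n")
  case True then show ?thesis by simp
next
  case False
  moreover assume "i < n"
  ultimately have "i + 1 < n" by simp
  then show ?thesis using False by simp
qed

lemma mod_lt: "(i::nat) < n \<Longrightarrow> k mod n < n"
proof -
  assume "i < n" then have "0 < n" by simp
  then show ?thesis by simp
qed

lemma fe_mem: "face_edge c u v \<Longrightarrow> u \<in> set c \<and> v \<in> set c"
  unfolding face_edge_def by (metis gr_implies_not0 length_greater_0_conv list.size(3) mod_less_divisor nth_mem)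

lemma fe_neq: "distinct c \<Longrightarrow> length c \<ge> 3 \<Longrightarrow> face_edge c u v \<Longrightarrow> u \<noteq> v"
  unfolding face_edge_def
proof (elim exE conjE)
  fix i assume d: "distinct c" and l: "length c \<ge> 3" and i: "i < length c"
    and u: "c ! i = u" and v: "c ! ((i + 1) mod length c) = v"
  have "(i + 1) mod length c < length c" using i by (rule mod_lt)
  moreover have "(i + 1) mod length c \<noteq> i" using i l by (auto simp: mod_suc_eq)
  ultimately show "u \<noteq> v" using d i u v by (metis nth_eq_iff_index_eq)
qed

lemma fe_not_both: "distinct c \<Longrightarrow> length c \<ge> 3 \<Longrightarrow> face_edge c u v \<Longrightarrow> face_edge c v u \<Longrightarrow> False"
  unfolding face_edge_def
proof (elim exE conjE)
  fix i j assume d: "distinct c" and l: "length c \<ge> 3" and i: "i < length c"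
    and u: "c ! i = u" and v: "c ! ((i + 1) mod length c) = v"
    and j: "j < length c" and v2: "c ! j = v" and u2: "c ! ((j + 1) mod length c) = u"
  have i1: "(i + 1) mod length c < length c" using i by (rule mod_lt)
  have j1: "(j + 1) mod length c < length c" using j by (rule mod_lt)
  have "j = (i + 1) mod length c" using d i1 j v v2 by (metis nth_eq_iff_index_eq)
  moreover have "(j + 1) mod length c = i" using d i j1 u u2 by (metis nth_eq_iff_index_eq)
  ultimately show False using i l by (auto simp: mod_suc_eq split: if_splits)
qed

lemma mod2_eq: "(((i::nat) + 1) mod n + 1) mod n = (i + 2) mod n"
  by (metis mod_add_left_eq add.assoc one_add_one)

lemma fc_edges: "face_corner c u x w \<Longrightarrow> face_edge c u x \<and> face_edge c x w"
  unfolding face_corner_def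
proof (elim exE conjE)
  fix i assume i: "i < length c" and a: "c ! i = u" "c ! ((i + 1) mod length c) = x"
    "c ! ((i + 2) mod length c) = w"
  define k where "k = (i + 1) mod length c"
  have k1: "k < length c" unfolding k_def using i by (rule mod_lt)
  have k2: "c ! k = x" unfolding k_def using a(2) .
  have k3: "c ! ((k + 1) mod length c) = w" unfolding k_def mod2_eq using a(3) .
  have "face_edge c x w" unfolding face_edge_def using k1 k2 k3 by blast
  moreover have "face_edge c u x" unfolding face_edge_def using i a(1,2) by blast
  ultimately show "face_edge c u x \<and> face_edge c x w" by blast
qed

lemma suc_mod_inj: "(i + 1) mod n = (j + 1) mod n \<Longrightarrow> (i::nat) < n \<Longrightarrow> j < n \<Longrightarrow> i = j"
proof -
  assume h: "(i + 1) mod n = (j + 1) mod n" and i: "i < n" and j: "j < n"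
  have ei: "(i + 1) mod n = (if i + 1 = n then 0 else i + 1)" using mod_suc_eq[OF i] by simp
  have ej: "(j + 1) mod n = (if j + 1 = n then 0 else j + 1)" using mod_suc_eq[OF j] by simp
  from h have "(if i + 1 = n then 0 else i + 1) = (if j + 1 = n then (0::nat) else j + 1)"
    by (simp only: ei ej)
  then show "i = j" by (cases "i + 1 = n"; cases "j + 1 = n") simp_all
qed

lemma fc_unique: "distinct c \<Longrightarrow> face_corner c u x w \<Longrightarrow> face_corner c u' x w' \<Longrightarrow> u = u' \<and> w = w'"
  unfolding face_corner_def
proof (elim exE conjE)
  fix i j assume d: "distinct c" and i: "i < length c" and j: "j < length c"
    and a: "c ! i = u" "c ! ((i + 1) mod length c) = x" "c ! ((i + 2) mod length c) = w"
    and b: "c ! j = u'" "c ! ((j + 1) mod length c) = x" "c ! ((j + 2) mod length c) = w'"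
  have i1: "(i + 1) mod length c < length c" using i by (rule mod_lt)
  have j1: "(j + 1) mod length c < length c" using j by (rule mod_lt)
  have "c ! ((i + 1) mod length c) = c ! ((j + 1) mod length c)" using a(2) b(2) by simp
  then have "(i + 1) mod length c = (j + 1) mod length c"
    using nth_eq_iff_index_eq[OF d i1 j1] by simp
  hence "i = j" using i j by (rule suc_mod_inj)
  thus "u = u' \<and> w = w'" using a b by simp
qed

lemma fc_exists: "x \<in> set c \<Longrightarrow> length c \<ge> 3 \<Longrightarrow> \<exists>u w. face_corner c u x w"
proof -
  assume x: "x \<in> set c" and l: "length c \<ge> 3"
  then obtain i where i: "i < length c" "c ! i = x" by (metis in_set_conv_nth)
  define n where "n = length c"
  have n3: "n \<ge> 3" using l n_def by simp
  define j where "j = (if i = 0 then n - 1 else i - 1)"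
  have jn: "j < n" using n3 i n_def j_def by auto
  have j1: "(j + 1) mod n = i"
  proof (cases "i = 0")
    case True
    then have "j + 1 = n" using n3 j_def by simp
    then show ?thesis using True by simp
  next
    case False
    then have "j + 1 = i" using j_def by simp
    then show ?thesis using i n_def by simp
  qed
  have j2: "(j + 2) mod n = (i + 1) mod n" using mod2_eq[of j n] j1 by simp
  have "c ! j = c ! j \<and> c ! ((j + 1) mod length c) = x \<and> c ! ((j + 2) mod length c) = c ! ((i + 1) mod length c)"
    using j1 j2 i(2) unfolding n_def by simp
  then have "face_corner c (c ! j) x (c ! ((i + 1) mod length c))"
    unfolding face_corner_def using jn n_def by blast
  then show ?thesis by blast
qed

lemma fin_fe: "finite {(u,v). face_edge c u v}"
proof (rule finite_subset)
  show "{(u,v). face_edge c u v} \<subseteq> set c \<times> set c" by (auto dest: fe_mem)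
qed simp

lemma card_fe: assumes "distinct c" shows "card {(u,v). face_edge c u v} = length c"
proof -
  have "{(u,v). face_edge c u v} = (\<lambda>i. (c!i, c!((i+1) mod length c))) ` {..<length c}"
    unfolding face_edge_def by auto
  moreover have "inj_on (\<lambda>i. (c!i, c!((i+1) mod length c))) {..<length c}"
    using assms by (auto simp: inj_on_def nth_eq_iff_index_eq)
  ultimately show ?thesis by (simp add: card_image)
qed

lemma card_darts:
  assumes finF: "finite F" and dist: "\<forall>f\<in>F. distinct (bd f)"
    and uniq: "\<forall>f\<in>F. \<forall>g\<in>F. \<forall>u v. face_edge (bd f) u v \<and> face_edge (bd g) u v \<longrightarrow> f = g"
  shows "card (darts F bd) = (\<Sum>f\<in>F. length (bd f))"
proof -
  have eq: "darts F bd = (\<Union>f\<in>F. {(u,v). face_edge (bd f) u v})" unfolding darts_def by auto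
  have "card (\<Union>f\<in>F. {(u,v). face_edge (bd f) u v}) = (\<Sum>f\<in>F. card {(u,v). face_edge (bd f) u v})"
    using finF fin_fe uniq by (intro card_UN_disjoint) blast+
  also have "\<dots> = (\<Sum>f\<in>F. length (bd f))" using dist card_fe by (intro sum.cong) auto
  finally show ?thesis using eq by simp
qed

lemma card_edges:
  assumes symd: "\<forall>u v. (u,v) \<in> D \<longrightarrow> (v,u) \<in> D" and irr: "\<forall>u v. (u,v) \<in> D \<longrightarrow> u \<noteq> v"
    and finD: "finite D"
  shows "card D = 2 * card {{u, v} | u v. (u, v) \<in> D}"
proof -
  let ?E = "{{u, v} | u v. (u, v) \<in> D}"
  let ?s = "\<lambda>(x::'a,y::'a). {x,y}"
  have pe: "?E = ?s ` D" by auto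
  have finE: "finite ?E" using pe finD by simp
  have eq: "D = (\<Union>e\<in>?E. {d\<in>D. ?s d = e})" by auto
  have "card (\<Union>e\<in>?E. {d\<in>D. ?s d = e}) = (\<Sum>e\<in>?E. card {d\<in>D. ?s d = e})"
    by (rule card_UN_disjoint) (use finE finD in auto)
  also have "\<dots> = (\<Sum>e\<in>?E. 2)"
  proof (rule sum.cong)
    fix e assume "e \<in> ?E"
    then obtain u v where e: "e = {u,v}" "(u,v) \<in> D" by auto
    have "{d\<in>D. ?s d = e} = {(u,v),(v,u)}" using e symd by (auto simp: doubleton_eq_iff)
    moreover have "u \<noteq> v" using irr e by auto
    ultimately show "card {d\<in>D. ?s d = e} = 2" by simp
  qed simp
  finally show ?thesis using eq by simp
qed

lemma rtrancl_avoid: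
  assumes "(x,y) \<in> R\<^sup>*"
  shows "(x,y) \<in> (R - {(a,c)})\<^sup>* \<or> ((x,a) \<in> (R - {(a,c)})\<^sup>* \<and> (c,y) \<in> (R - {(a,c)})\<^sup>*)"
  using assms
proof (induction rule: rtrancl_induct)
  case base then show ?case by simp
next
  case (step y z)
  show ?case
  proof (cases "(y,z) = (a,c)")
    case True
    then show ?thesis using step.IH by auto
  next
    case False
    then have "(y,z) \<in> R - {(a,c)}" using step.hyps(2) by simp
    then show ?thesis using step.IH by (meson rtrancl.rtrancl_into_rtrancl)
  qed
qed

lemma closure_fw:
  assumes fw: "\<And>u v. u \<in> X \<Longrightarrow> (u,v) \<in> S \<Longrightarrow> v \<in> X"
  shows "(p,q) \<in> S\<^sup>* \<Longrightarrow> p \<in> X \<Longrightarrow> q \<in> X"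
  by (induction rule: rtrancl_induct) (auto intro: fw)

lemma closure_bw:
  assumes bw: "\<And>u v. v \<in> X \<Longrightarrow> (u,v) \<in> S \<Longrightarrow> u \<in> X"
  shows "(p,q) \<in> S\<^sup>* \<Longrightarrow> q \<in> X \<Longrightarrow> p \<in> X"
  by (induction rule: converse_rtrancl_induct) (auto intro: bw)

lemma rot_closure:
  assumes fw: "\<And>u v. u \<in> X \<Longrightarrow> (u,v) \<in> R - {(a,c)} \<Longrightarrow> v \<in> X"
    and bw: "\<And>u v. v \<in> X \<Longrightarrow> (u,v) \<in> R - {(a,c)} \<Longrightarrow> u \<in> X"
    and x: "x \<in> X" and xy: "(x,y) \<in> R\<^sup>*" and yx: "(y,x) \<in> R\<^sup>*"
  shows "y \<in> X"
proof -
  have F: "\<And>p q. (p,q) \<in> (R - {(a,c)})\<^sup>* \<Longrightarrow> p \<in> X \<Longrightarrow> q \<in> X"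
    using closure_fw[where X=X and S="R-{(a,c)}"] fw by blast
  have B: "\<And>p q. (p,q) \<in> (R - {(a,c)})\<^sup>* \<Longrightarrow> q \<in> X \<Longrightarrow> p \<in> X"
    using closure_bw[where X=X and S="R-{(a,c)}"] bw by blast
  from rtrancl_avoid[OF xy, of a c] show ?thesis
  proof
    assume "(x, y) \<in> (R - {(a, c)})\<^sup>*" then show ?thesis using F x by blast
  next
    assume 1: "(x, a) \<in> (R - {(a, c)})\<^sup>* \<and> (c, y) \<in> (R - {(a, c)})\<^sup>*"
    from rtrancl_avoid[OF yx, of a c] show ?thesis
    proof
      assume "(y, x) \<in> (R - {(a, c)})\<^sup>*" then show ?thesis using B x by blast
    next
      assume "(y, a) \<in> (R - {(a, c)})\<^sup>* \<and> (c, x) \<in> (R - {(a, c)})\<^sup>*"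
      then have "c \<in> X" using B x by blast
      then show ?thesis using F 1 by blast
    qed
  qed
qed

theorem lemma4p1:
  fixes F :: "'f set" and bd :: "'f \<Rightarrow> 'v list" and pinf :: 'f
    and a :: "'f \<Rightarrow> int" and b :: "'v \<Rightarrow> int"
  assumes G: "plane_2conn F bd pinf"
    and adm: "admissible F bd pinf a b"
    and h1: "\<exists>v v'. face_edge (bd pinf) v v' \<and> b v = 1 \<and> b v' = 1"
    and h2: "\<forall>p\<in>F - {pinf}. a p + bface bd b p = 0"
    and h3: "\<forall>p\<in>F - {pinf}. \<forall>v1 v2. face_edge (bd p) v1 v2 \<longrightarrow>
               (b v1 - bface bd b p) * (b v2 - bface bd b p) = 0"
  shows "(\<forall>w\<in>pverts F bd. b w \<ge> 1) \<and> (\<forall>p\<in>F - {pinf}. a p = -1)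
         \<and> Bval F bd pinf a b \<ge> 2 + int (card (set (bd pinf)))"
proof -
  define V where "V = pverts F bd"
  from G have finF: "finite F" and pinfF: "pinf \<in> F"
    and cyc: "\<forall>f\<in>F. distinct (bd f) \<and> length (bd f) \<ge> 3"
    and uniq: "\<forall>f\<in>F. \<forall>g\<in>F. \<forall>u v. face_edge (bd f) u v \<and> face_edge (bd g) u v \<longrightarrow> f = g"
    and symd: "\<forall>u v. (u,v) \<in> darts F bd \<longrightarrow> (v,u) \<in> darts F bd"
    and rot: "\<forall>v u u'. (u, v) \<in> darts F bd \<and> (u', v) \<in> darts F bd \<longrightarrow> (u, u') \<in> (rot_rel F bd v)\<^sup>*"
    and card3: "card (pverts F bd) \<ge> 3"
    and conn: "conn_on F bd (pverts F bd)"
    and euler: "int (card (pverts F bd)) - int (card (pedges F bd)) + int (card F) = 2"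
    unfolding plane_2conn_def by auto
  have finV: "finite V" unfolding V_def pverts_def using finF by auto
  have Vne: "V \<noteq> {}" using card3 V_def by auto
  define m where "m = Min (b ` V)"
  have h3': "\<And>p v1 v2. p \<in> F-{pinf} \<Longrightarrow> face_edge (bd p) v1 v2 \<Longrightarrow>
      (b v1 - bface bd b p) * (b v2 - bface bd b p) = 0" using h3 by blast
  have m_le: "\<And>v. v \<in> V \<Longrightarrow> m \<le> b v" unfolding m_def using finV by simp
  have "m \<in> b ` V" unfolding m_def using finV Vne by simp
  then obtain z0 where z0: "z0 \<in> V" "b z0 = m" by (metis imageE)
  have setV: "\<And>f. f \<in> F \<Longrightarrow> set (bd f) \<subseteq> V" unfolding V_def pverts_def by auto
  have bface_le: "\<And>f v. v \<in> set (bd f) \<Longrightarrow> bface bd b f \<le> b v"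
    unfolding bface_def by simp
  have bface_ge: "\<And>f. f \<in> F \<Longrightarrow> m \<le> bface bd b f"
  proof -
    fix f assume f: "f \<in> F"
    have "length (bd f) \<ge> 3" using cyc f by blast
    then have "set (bd f) \<noteq> {}" by auto
    then show "m \<le> bface bd b f" unfolding bface_def using f setV m_le
      by (auto intro!: Min.boundedI)
  qed
  have bface_eq: "\<And>f v. f \<in> F \<Longrightarrow> v \<in> set (bd f) \<Longrightarrow> b v = m \<Longrightarrow> bface bd b f = m"
    using bface_le bface_ge by (metis order_antisym)
  have dartsI: "\<And>f u v. f \<in> F \<Longrightarrow> face_edge (bd f) u v \<Longrightarrow> (u,v) \<in> darts F bd"
    unfolding darts_def by auto
  have dartsE: "\<And>u v. (u,v) \<in> darts F bd \<Longrightarrow> \<exists>f\<in>F. face_edge (bd f) u v"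
    unfolding darts_def by auto
  define Gp where "Gp z \<longleftrightarrow> (\<forall>f\<in>F-{pinf}. z \<in> set (bd f) \<longrightarrow> bface bd b f = m)" for z
  have G0: "\<And>z. b z = m \<Longrightarrow> Gp z" unfolding Gp_def using bface_eq by blast
  have Gstep: "\<And>w z. Gp w \<Longrightarrow> (w,z) \<in> darts F bd \<Longrightarrow> Gp z"
  proof -
    fix w z assume Gw: "Gp w" and wz: "(w,z) \<in> darts F bd"
    show "Gp z"
    proof (cases "b z = m")
      case True then show ?thesis using G0 by blast
    next
      case False
      obtain f1 where f1: "f1\<in>F" "face_edge (bd f1) w z" using wz dartsE by blast
      obtain f2 where f2: "f2\<in>F" "face_edge (bd f2) z w" using symd wz dartsE by blast
      have zV: "z \<in> V" using fe_mem[OF f1(2)] setV[OF f1(1)] by blast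
      have bz: "b z > m" using m_le[OF zV] False by simp
      have bw: "b w = m"
      proof (cases "f1 = pinf")
        case True
        have "distinct (bd pinf)" "length (bd pinf) \<ge> 3" using cyc pinfF by auto
        then have "f2 \<noteq> pinf" using f1 f2 True fe_not_both[of "bd pinf" w z] by blast
        then have "bface bd b f2 = m" using Gw f2(1) fe_mem[OF f2(2)] unfolding Gp_def by blast
        then have "(b z - m) * (b w - m) = 0" using h3'[of f2 z w] f2 \<open>f2 \<noteq> pinf\<close> by simp
        then show ?thesis using bz by simp
      next
        case False
        then have "bface bd b f1 = m" using Gw f1(1) fe_mem[OF f1(2)] unfolding Gp_def by blast
        then have "(b w - m) * (b z - m) = 0" using h3'[of f1 w z] f1 False by simp
        then show ?thesis using bz by simp
      qed
      define R where "R = rot_rel F bd z"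
      have "length (bd pinf) \<ge> 3" using cyc pinfF by auto
      then have "\<exists>a0 c0. z \<in> set (bd pinf) \<longrightarrow> face_corner (bd pinf) a0 z c0"
        using fc_exists[of z "bd pinf"] by blast
      then obtain a0 c0 where ac: "z \<in> set (bd pinf) \<Longrightarrow> face_corner (bd pinf) a0 z c0"
        by blast
      define X where "X = {u. b u = m}"
      have Rface: "\<And>u u'. (u,u') \<in> R - {(a0,c0)} \<Longrightarrow> \<exists>f\<in>F-{pinf}. face_corner (bd f) u z u'"
      proof -
        fix u u' assume "(u,u') \<in> R - {(a0,c0)}"
        then obtain f where f: "f \<in> F" "face_corner (bd f) u z u'" and ne: "(u,u') \<noteq> (a0,c0)"
          unfolding R_def rot_rel_def by auto
        have "f \<noteq> pinf"
        proof
          assume fp: "f = pinf"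
          have "z \<in> set (bd f)" using fe_mem[of "bd f" z u'] fc_edges[OF f(2)] by blast
          then have "z \<in> set (bd pinf)" using fp by simp
          then have "face_corner (bd pinf) a0 z c0" by (rule ac)
          moreover have "distinct (bd pinf)" using cyc pinfF by auto
          moreover have "face_corner (bd pinf) u z u'" using f(2) fp by simp
          ultimately have "u = a0 \<and> u' = c0" using fc_unique[of "bd pinf" u z u' a0 c0] by blast
          then show False using ne by simp
        qed
        then show "\<exists>f\<in>F-{pinf}. face_corner (bd f) u z u'" using f by blast
      qed
      have fw: "\<And>u u'. u \<in> X \<Longrightarrow> (u,u') \<in> R - {(a0,c0)} \<Longrightarrow> u' \<in> X"
      proof -
        fix u u' assume uX: "u \<in> X" and uu: "(u,u') \<in> R - {(a0,c0)}"
        then obtain f where f: "f\<in>F-{pinf}" "face_corner (bd f) u z u'" using Rface by blast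
        have e: "face_edge (bd f) u z" "face_edge (bd f) z u'" using fc_edges[OF f(2)] by auto
        have "bface bd b f = m" using bface_eq[of f u] f(1) fe_mem[OF e(1)] uX unfolding X_def by blast
        then have "(b z - m) * (b u' - m) = 0" using h3'[OF f(1) e(2)] by simp
        then show "u' \<in> X" using bz X_def by simp
      qed
      have bw': "\<And>u u'. u' \<in> X \<Longrightarrow> (u,u') \<in> R - {(a0,c0)} \<Longrightarrow> u \<in> X"
      proof -
        fix u u' assume uX: "u' \<in> X" and uu: "(u,u') \<in> R - {(a0,c0)}"
        then obtain f where f: "f\<in>F-{pinf}" "face_corner (bd f) u z u'" using Rface by blast
        have e: "face_edge (bd f) u z" "face_edge (bd f) z u'" using fc_edges[OF f(2)] by auto
        have "bface bd b f = m" using bface_eq[of f u'] f(1) fe_mem[OF e(2)] uX unfolding X_def by blast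
        then have "(b u - m) * (b z - m) = 0" using h3'[OF f(1) e(1)] by simp
        then show "u \<in> X" using bz X_def by simp
      qed
      show "Gp z" unfolding Gp_def
      proof (intro ballI impI)
        fix f assume f: "f \<in> F-{pinf}" and zf: "z \<in> set (bd f)"
        obtain u w' where c: "face_corner (bd f) u z w'" using fc_exists[OF zf] f cyc by blast
        have uz: "(u,z) \<in> darts F bd" using dartsI[of f u z] fc_edges[OF c] f by blast
        have "(w,u) \<in> R\<^sup>*" "(u,w) \<in> R\<^sup>*" using rot wz uz unfolding R_def by blast+
        moreover have "w \<in> X" using bw X_def by simp
        ultimately have "u \<in> X" using rot_closure[of X R a0 c0 w u] fw bw' by blast
        moreover have "u \<in> set (bd f)" using fe_mem[of "bd f" u z] fc_edges[OF c] by blast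
        ultimately show "bface bd b f = m" using bface_eq[of f u] f unfolding X_def by blast
      qed
    qed
  qed
  have allG: "\<And>z. z \<in> V \<Longrightarrow> Gp z"
  proof -
    fix z assume zV: "z \<in> V"
    have "(z0, z) \<in> {(x, y). (x, y) \<in> darts F bd \<and> x \<in> V \<and> y \<in> V}\<^sup>*"
      using conn z0 zV unfolding conn_on_def V_def by blast
    then show "Gp z"
    proof (induction rule: rtrancl_induct)
      case base then show ?case using G0 z0 by blast
    next
      case (step y z') then show ?case using Gstep by blast
    qed
  qed
  have allT: "\<And>f. f \<in> F - {pinf} \<Longrightarrow> bface bd b f = m"
  proof -
    fix f assume f: "f \<in> F - {pinf}"
    have "length (bd f) \<ge> 3" using cyc f by blast
    then have "set (bd f) \<noteq> {}" by auto
    then obtain z where z: "z \<in> set (bd f)" by (meson ex_in_conv)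
    then have "z \<in> V" using setV f by blast
    then show "bface bd b f = m" using allG f z unfolding Gp_def by blast
  qed
  have m1: "m = 1"
  proof -
    obtain v v' where vv: "face_edge (bd pinf) v v'" "b v = 1" "b v' = 1" using h1 by blast
    have "(v',v) \<in> darts F bd" using symd dartsI vv pinfF by blast
    then obtain q where q: "q \<in> F" "face_edge (bd q) v' v" using dartsE by blast
    have "distinct (bd pinf)" "length (bd pinf) \<ge> 3" using cyc pinfF by auto
    then have "q \<noteq> pinf" using q vv fe_not_both[of "bd pinf" v v'] by blast
    then have "bface bd b q = m" using allT q by blast
    then have "(1 - m) * (1 - m) = 0" using h3'[of q v' v] q vv \<open>q \<noteq> pinf\<close> by simp
    then show ?thesis by simp
  qed
  have P1: "\<forall>w\<in>pverts F bd. b w \<ge> 1" using m_le m1 V_def by auto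
  have P2: "\<forall>p\<in>F - {pinf}. a p = -1" 
  proof
    fix p assume p: "p \<in> F - {pinf}"
    then have "a p + bface bd b p = 0" using h2 by blast
    then show "a p = -1" using allT[OF p] m1 by simp
  qed
  have finD: "finite (darts F bd)"
  proof (rule finite_subset)
    show "darts F bd \<subseteq> V \<times> V"
    proof
      fix d assume "d \<in> darts F bd"
      then obtain u v where d: "d = (u,v)" "(u,v) \<in> darts F bd" by (cases d) auto
      then obtain f where "f \<in> F" "face_edge (bd f) u v" using dartsE by blast
      then show "d \<in> V \<times> V" using fe_mem[of "bd f" u v] setV d by blast
    qed
  qed (use finV in simp)
  have irr: "\<forall>u v. (u,v) \<in> darts F bd \<longrightarrow> u \<noteq> v"
  proof (intro allI impI)
    fix u v assume "(u,v) \<in> darts F bd"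
    then obtain f where "f \<in> F" "face_edge (bd f) u v" using dartsE by blast
    then show "u \<noteq> v" using cyc fe_neq[of "bd f" u v] by blast
  qed
  have cD: "card (darts F bd) = (\<Sum>f\<in>F. length (bd f))"
    using card_darts finF cyc uniq by blast
  have cE: "card (darts F bd) = 2 * card (pedges F bd)"
    unfolding pedges_def using card_edges[OF symd irr finD] .
  have sumL: "(\<Sum>f\<in>F. int (length (bd f))) = 2 * int (card (pedges F bd))"
    using cD cE by (metis of_nat_sum of_nat_mult of_nat_numeral)
  have s1: "(\<Sum>p\<in>F-{pinf}. (int (length (bd p)) - 2) * a p) = - (\<Sum>p\<in>F-{pinf}. int (length (bd p)) - 2)"
  proof -
    have "(\<Sum>p\<in>F-{pinf}. (int (length (bd p)) - 2) * a p) = (\<Sum>p\<in>F-{pinf}. - (int (length (bd p)) - 2))"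
      by (rule sum.cong) (use P2 in auto)
    also have "\<dots> = - (\<Sum>p\<in>F-{pinf}. int (length (bd p)) - 2)" by (rule sum_negf)
    finally show ?thesis .
  qed
  have s2: "(\<Sum>p\<in>F-{pinf}. int (length (bd p)) - 2) = (\<Sum>p\<in>F. int (length (bd p)) - 2) - (int (length (bd pinf)) - 2)"
    using finF pinfF by (simp add: sum_diff1)
  have s3: "(\<Sum>p\<in>F. int (length (bd p)) - 2) = (\<Sum>p\<in>F. int (length (bd p))) - 2 * int (card F)"
    by (simp add: sum_subtractf)
  have sb: "(\<Sum>v\<in>V. b v) \<ge> int (card V)"
  proof -
    have "(\<Sum>v\<in>V. b v) \<ge> (\<Sum>v\<in>V. 1)" using P1 V_def by (intro sum_mono) auto
    then show ?thesis by simp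
  qed
  have lp: "card (set (bd pinf)) = length (bd pinf)" using cyc pinfF distinct_card by blast
  have "Bval F bd pinf a b \<ge> 2 + int (card (set (bd pinf)))"
  proof -
    have e: "int (card V) - int (card (pedges F bd)) + int (card F) = 2" using euler V_def by simp
    have bv: "Bval F bd pinf a b = 2 * (\<Sum>v\<in>V. b v) + (\<Sum>p\<in>F-{pinf}. (int (length (bd p)) - 2) * a p)"
      unfolding Bval_def V_def by simp
    have l: "int (card (set (bd pinf))) = int (length (bd pinf))" using lp by simp
    show ?thesis unfolding bv l using s1 s2 s3 sumL sb e by linarith
  qed
  then show ?thesis using P1 P2 by blast
qed

end
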